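(* Let $\mathscr D:\mathscr N=\mathscr N_1\cup\cdots\cup\mathscr N_k$ be a $\mathscr C_{\mathscr D}$-decomposition of a chemical reaction network $\mathscr N$ with $\mathscr C_{\mathscr D}=\{y_1,y_2\}$ and $\ell>2$, where $\ell$ is the number of linkage classes of $\mathscr N$. If there is at most one path in $\mathscr N$ that connects $y_1$ and $y_2$, then $\mathscr D$ is incidence independent.
   Context: A CRN $\mathscr N=(\mathscr S,\mathscr C,\mathscr R)$ is viewed as a directed graph on its complexes with arcs its reactions; paths are paths in the underlying undirected graph and linkage classes are its connected components. A decomposition $\mathscr N=\mathscr N_1\cup\cdots\cup\mathscr N_k$ ($k\ge 2$) is given by a partition $\{\mathscr R_1,\dots,\mathscr R_k\}$ of the reaction set; the subnetwork $\mathscr N_i$ has reactions $\mathscr R_i$ and complex set $\mathscr C_i$ consisting of complexes occurring in reactions of $\mathscr R_i$. The set $\mathscr C_{\mathscr D}$ of common complexes consists of the complexes lying in the complex sets of at least two distinct subnetworks. A $\mathscr C_{\mathscr D}$-decomposition is one with $\mathscr C_i\cap\mathscr C_j=\mathscr C_{\mathscr D}$ for all $i\ne j$. With $n,\ell$ the numbers of complexes and linkage classes of $\mathscr N$ and $n_i,\ell_i$ those of $\mathscr N_i$, the decomposition is incidence independent if the image of the incidence map of $\mathscr N$ (the linear map $\mathbb R^{\mathscr R}\to\mathbb R^{\mathscr C}$ sending a reaction $y\to y'$ to $\omega_{y'}-\omega_y$) is the direct sum of the images of the incidence maps of the $\mathscr N_i$, equivalently $n-\ell=\sum_i(n_i-\ell_i)$.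 *)

theory Defs
  imports Complex_Main
begin

text \<open>A CRN is represented by its finite set of reactions R, a reaction y \<rightarrow> y'
  being the pair (y, y') with y \<noteq> y'.\<close>

definition crn :: "('c \<times> 'c) set \<Rightarrow> bool" where
  "crn R \<longleftrightarrow> finite R \<and> (\<forall>(y, y') \<in> R. y \<noteq> y')"

definition complexes :: "('c \<times> 'c) set \<Rightarrow> 'c set" where
  "complexes R = fst ` R \<union> snd ` R"

definition linkage_classes :: "('c \<times> 'c) set \<Rightarrow> 'c set set" where
  "linkage_classes R = complexes R //
     {(x, y). x \<in> complexes R \<and> y \<in> complexes R \<and> (x, y) \<in> (R \<union> R\<inverse>)\<^sup>*}"

text \<open>Image of the incidence map R^R \<rightarrow> R^C, (y \<rightarrow> y') \<mapsto> \<omega>_{y'} - \<omega>_y,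
  vectors in R^C being represented as functions 'c \<Rightarrow> real.\<close>
definition omega :: "'c \<Rightarrow> 'c \<Rightarrow> real" where
  "omega y = (\<lambda>c. if c = y then 1 else 0)"

definition incidence_image :: "('c \<times> 'c) set \<Rightarrow> ('c \<Rightarrow> real) set" where
  "incidence_image R =
     {(\<lambda>c. \<Sum>r\<in>R. \<alpha> r * (omega (snd r) c - omega (fst r) c)) | \<alpha>. True}"

definition decomposition :: "('c \<times> 'c) set \<Rightarrow> nat \<Rightarrow> (nat \<Rightarrow> ('c \<times> 'c) set) \<Rightarrow> bool" where
  "decomposition R k Rs \<longleftrightarrow> k \<ge> 2 \<and> (\<forall>i<k. Rs i \<noteq> {}) \<and>
     (\<forall>i<k. \<forall>j<k. i \<noteq> j \<longrightarrow> Rs i \<inter> Rs j = {}) \<and> (\<Union>i<k. Rs i) = R"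

definition common_complexes :: "nat \<Rightarrow> (nat \<Rightarrow> ('c \<times> 'c) set) \<Rightarrow> 'c set" where
  "common_complexes k Rs =
     {y. \<exists>i<k. \<exists>j<k. i \<noteq> j \<and> y \<in> complexes (Rs i) \<and> y \<in> complexes (Rs j)}"

definition CD_decomposition :: "('c \<times> 'c) set \<Rightarrow> nat \<Rightarrow> (nat \<Rightarrow> ('c \<times> 'c) set) \<Rightarrow> bool" where
  "CD_decomposition R k Rs \<longleftrightarrow> decomposition R k Rs \<and>
     (\<forall>i<k. \<forall>j<k. i \<noteq> j \<longrightarrow> complexes (Rs i) \<inter> complexes (Rs j) = common_complexes k Rs)"

text \<open>Incidence independence: Im of the incidence map of R is the direct sum of the
  images of the incidence maps of the subnetworks.\<close>
definition incidence_independent :: "('c \<times> 'c) set \<Rightarrow> nat \<Rightarrow> (nat \<Rightarrow> ('c \<times> 'c) set) \<Rightarrow> bool" where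
  "incidence_independent R k Rs \<longleftrightarrow>
     incidence_image R = {(\<lambda>c. \<Sum>i<k. v i c) | v. \<forall>i<k. v i \<in> incidence_image (Rs i)} \<and>
     (\<forall>v. (\<forall>i<k. v i \<in> incidence_image (Rs i)) \<and> (\<forall>c. (\<Sum>i<k. v i c) = 0) \<longrightarrow> (\<forall>i<k. \<forall>c. v i c = 0))"

text \<open>Paths are identified by their vertex and reaction sequences.\<close>
definition is_path :: "('c \<times> 'c) set \<Rightarrow> 'c \<Rightarrow> 'c \<Rightarrow> 'c list \<Rightarrow> ('c \<times> 'c) list \<Rightarrow> bool" where
  "is_path R y y' vs es \<longleftrightarrow> vs \<noteq> [] \<and> hd vs = y \<and> last vs = y' \<and> distinct vs \<and>
     length es = length vs - 1 \<and>
     (\<forall>j<length es. es ! j \<in> R \<and>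
        (es ! j = (vs ! j, vs ! Suc j) \<or> es ! j = (vs ! Suc j, vs ! j)))"

end

theory Submission
  imports Defs
begin

lemma img_zero_outside:
  assumes "v \<in> incidence_image S" "c \<notin> complexes S"
  shows "v c = 0"
proof -
  from assms(1) obtain \<alpha> where v: "v = (\<lambda>c. \<Sum>r\<in>S. \<alpha> r * (omega (snd r) c - omega (fst r) c))"
    unfolding incidence_image_def by auto
  have "\<forall>r\<in>S. omega (snd r) c = 0 \<and> omega (fst r) c = 0"
    using assms(2) by (force simp: omega_def complexes_def)
  then show ?thesis by (simp add: v)
qed

lemma class_finite:
  assumes "finite S" shows "finite {c. (a,c) \<in> (S \<union> S\<inverse>)\<^sup>*}"
proof (rule finite_subset)
  show "{c. (a,c) \<in> (S \<union> S\<inverse>)\<^sup>*} \<subseteq> insert a (complexes S)"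
  proof
    fix c assume "c \<in> {c. (a,c) \<in> (S \<union> S\<inverse>)\<^sup>*}"
    then have "(a,c) \<in> (S \<union> S\<inverse>)\<^sup>*" by simp
    then show "c \<in> insert a (complexes S)"
      by (cases rule: rtranclE) (force simp: complexes_def)+
  qed
  show "finite (insert a (complexes S))" using assms by (simp add: complexes_def)
qed

lemma img_class_sum:
  assumes "finite S" "v \<in> incidence_image S"
  shows "(\<Sum>c\<in>{c. (a,c) \<in> (S \<union> S\<inverse>)\<^sup>*}. v c) = 0"
proof -
  define L where "L = {c. (a,c) \<in> (S \<union> S\<inverse>)\<^sup>*}"
  have fL: "finite L" using class_finite[OF assms(1)] by (simp add: L_def)
  from assms(2) obtain \<alpha> where v: "v = (\<lambda>c. \<Sum>r\<in>S. \<alpha> r * (omega (snd r) c - omega (fst r) c))"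
    unfolding incidence_image_def by auto
  have om: "(\<Sum>c\<in>L. omega y c) = (if y \<in> L then 1 else 0)" for y
    using fL by (simp add: omega_def)
  have cl: "fst r \<in> L \<longleftrightarrow> snd r \<in> L" if "r \<in> S" for r
  proof -
    obtain x y where r: "r = (x,y)" by force
    have "(x,y) \<in> S \<union> S\<inverse>" "(y,x) \<in> S \<union> S\<inverse>" using that r by auto
    then show ?thesis unfolding L_def r by (auto intro: rtrancl_into_rtrancl)
  qed
  have "(\<Sum>c\<in>L. v c) = (\<Sum>r\<in>S. \<Sum>c\<in>L. \<alpha> r * (omega (snd r) c - omega (fst r) c))"
    unfolding v by (rule sum.swap)
  also have "\<dots> = (\<Sum>r\<in>S. \<alpha> r * ((\<Sum>c\<in>L. omega (snd r) c) - (\<Sum>c\<in>L. omega (fst r) c)))"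
    by (simp add: right_diff_distrib sum_subtractf sum_distrib_left)
  also have "\<dots> = 0" using cl by (intro sum.neutral) (auto simp: om)
  finally show ?thesis by (simp add: L_def)
qed

lemma img_not_conn:
  assumes "finite S" "v \<in> incidence_image S" "\<forall>c. c \<noteq> a \<and> c \<noteq> b \<longrightarrow> v c = 0"
    "(a,b) \<notin> (S \<union> S\<inverse>)\<^sup>*"
  shows "v a = 0"
proof -
  let ?L = "{c. (a,c) \<in> (S \<union> S\<inverse>)\<^sup>*}"
  have "(\<Sum>c\<in>?L. v c) = (\<Sum>c\<in>?L. if c = a then v a else 0)"
    using assms(3,4) by (intro sum.cong) auto
  also have "\<dots> = v a" using class_finite[OF assms(1), of a] by simp
  finally show ?thesis using img_class_sum[OF assms(1,2), of a] by simp
qed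

lemma conn_sym: "(a,b) \<in> (S \<union> S\<inverse>)\<^sup>* \<Longrightarrow> (b,a) \<in> (S \<union> S\<inverse>)\<^sup>*"
  by (metis converse_Un converse_converse rtrancl_converseI sup_commute)

lemma path_exists:
  assumes "(a,b) \<in> (S \<union> S\<inverse>)\<^sup>*"
  shows "\<exists>vs es. is_path S a b vs es"
  using assms
proof (induction rule: rtrancl_induct)
  case base
  have "is_path S a a [a] []" by (simp add: is_path_def)
  then show ?case by blast
next
  case (step b c)
  from step.IH obtain vs es where p: "is_path S a b vs es" by blast
  from step.hyps(2) obtain e where e: "e \<in> S" "e = (b,c) \<or> e = (c,b)" by auto
  show ?case
  proof (cases "c \<in> set vs")
    case True
    then obtain m where m: "m < length vs" "vs ! m = c" by (auto simp: in_set_conv_nth)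
    have "is_path S a c (take (Suc m) vs) (take m es)"
    proof -
      have l: "last (take (Suc m) vs) = vs ! m" using m(1)
        by (simp add: take_Suc_conv_app_nth)
      show ?thesis using p m l unfolding is_path_def by auto
    qed
    then show ?thesis by blast
  next
    case False
    have le: "length es = length vs - 1" "vs \<noteq> []" "last vs = b" using p by (auto simp: is_path_def)
    have all: "\<forall>j<length (es @ [e]). (es @ [e]) ! j \<in> S \<and>
        ((es @ [e]) ! j = ((vs @ [c]) ! j, (vs @ [c]) ! Suc j) \<or>
         (es @ [e]) ! j = ((vs @ [c]) ! Suc j, (vs @ [c]) ! j))"
    proof (intro allI impI)
      fix j assume j: "j < length (es @ [e])"
      show "(es @ [e]) ! j \<in> S \<and>
        ((es @ [e]) ! j = ((vs @ [c]) ! j, (vs @ [c]) ! Suc j) \<or>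
         (es @ [e]) ! j = ((vs @ [c]) ! Suc j, (vs @ [c]) ! j))"
      proof (cases "j < length es")
        case True
        then have "j < length vs" "Suc j < length vs" using le by auto
        then show ?thesis using p True by (auto simp: is_path_def nth_append)
      next
        case False
        then have jj: "j = length es" using j by simp
        have "vs ! (length vs - 1) = b" using le by (simp add: last_conv_nth)
        then show ?thesis using jj le e by (auto simp: nth_append)
      qed
    qed
    have "is_path S a c (vs @ [c]) (es @ [e])"
      using all p False le unfolding is_path_def by auto
    then show ?thesis by blast
  qed
qed

lemma is_path_mono: "is_path S a b vs es \<Longrightarrow> S \<subseteq> T \<Longrightarrow> is_path T a b vs es"
  unfolding is_path_def by blast


theorem proposition7:
  fixes R :: "('c \<times> 'c) set" and k :: nat and Rs :: "nat \<Rightarrow> ('c \<times> 'c) set"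
    and y1 y2 :: 'c
  assumes "crn R"
    and "CD_decomposition R k Rs"
    and "y1 \<noteq> y2"
    and "common_complexes k Rs = {y1, y2}"
    and "card (linkage_classes R) > 2"
    and "\<forall>vs es vs' es'. is_path R y1 y2 vs es \<and> is_path R y1 y2 vs' es'
           \<longrightarrow> vs = vs' \<and> es = es'"
  shows "incidence_independent R k Rs"
proof -
  have finR: "finite R" using assms(1) by (simp add: crn_def)
  have dec: "k \<ge> 2" "\<forall>i<k. \<forall>j<k. i \<noteq> j \<longrightarrow> Rs i \<inter> Rs j = {}" "(\<Union>i<k. Rs i) = R"
    using assms(2) by (auto simp: CD_decomposition_def decomposition_def)
  have sub: "Rs i \<subseteq> R" if "i < k" for i using dec(3) that by blast
  have finRs: "finite (Rs i)" if "i < k" for i using sub[OF that] finR finite_subset by blast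
  have Im_eq: "incidence_image R = {(\<lambda>c. \<Sum>i<k. v i c) | v. \<forall>i<k. v i \<in> incidence_image (Rs i)}"
  proof
    show "incidence_image R \<subseteq> {(\<lambda>c. \<Sum>i<k. v i c) | v. \<forall>i<k. v i \<in> incidence_image (Rs i)}"
    proof
      fix w assume "w \<in> incidence_image R"
      then obtain \<alpha> where w: "w = (\<lambda>c. \<Sum>r\<in>R. \<alpha> r * (omega (snd r) c - omega (fst r) c))"
        unfolding incidence_image_def by auto
      define v where "v i = (\<lambda>c. \<Sum>r\<in>Rs i. \<alpha> r * (omega (snd r) c - omega (fst r) c))" for i
      have "\<forall>i<k. v i \<in> incidence_image (Rs i)" by (auto simp: incidence_image_def v_def)
      moreover have "w = (\<lambda>c. \<Sum>i<k. v i c)"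
      proof
        fix c
        have "w c = (\<Sum>r\<in>(\<Union>i<k. Rs i). \<alpha> r * (omega (snd r) c - omega (fst r) c))"
          using w dec(3) by simp
        also have "\<dots> = (\<Sum>i<k. v i c)" unfolding v_def
          by (rule sum.UNION_disjoint) (use finRs dec(2) in auto)
        finally show "w c = (\<Sum>i<k. v i c)" .
      qed
      ultimately show "w \<in> {(\<lambda>c. \<Sum>i<k. v i c) | v. \<forall>i<k. v i \<in> incidence_image (Rs i)}" by blast
    qed
    show "{(\<lambda>c. \<Sum>i<k. v i c) | v. \<forall>i<k. v i \<in> incidence_image (Rs i)} \<subseteq> incidence_image R"
    proof
      fix w assume "w \<in> {(\<lambda>c. \<Sum>i<k. v i c) | v. \<forall>i<k. v i \<in> incidence_image (Rs i)}"
      then obtain v where w: "w = (\<lambda>c. \<Sum>i<k. v i c)" and v: "\<forall>i<k. v i \<in> incidence_image (Rs i)"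
        by blast
      have "\<forall>i\<in>{..<k}. \<exists>\<alpha>. v i = (\<lambda>c. \<Sum>r\<in>Rs i. \<alpha> r * (omega (snd r) c - omega (fst r) c))"
        using v unfolding incidence_image_def by auto
      then obtain A where A: "\<forall>i\<in>{..<k}. v i = (\<lambda>c. \<Sum>r\<in>Rs i. A i r * (omega (snd r) c - omega (fst r) c))"
        by (metis bchoice)
      define idx where "idx r = (THE i. i < k \<and> r \<in> Rs i)" for r
      have idx: "idx r = i" if "i < k" "r \<in> Rs i" for i r
        unfolding idx_def using that dec(2) by (intro the_equality) blast+
      define \<alpha> where "\<alpha> r = A (idx r) r" for r
      have "w = (\<lambda>c. \<Sum>r\<in>R. \<alpha> r * (omega (snd r) c - omega (fst r) c))"
      proof
        fix c
        have "(\<Sum>r\<in>R. \<alpha> r * (omega (snd r) c - omega (fst r) c))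
            = (\<Sum>r\<in>(\<Union>i<k. Rs i). \<alpha> r * (omega (snd r) c - omega (fst r) c))"
          using dec(3) by simp
        also have "\<dots> = (\<Sum>i<k. \<Sum>r\<in>Rs i. \<alpha> r * (omega (snd r) c - omega (fst r) c))"
          by (rule sum.UNION_disjoint) (use finRs dec(2) in auto)
        also have "\<dots> = (\<Sum>i<k. v i c)"
          using A idx by (intro sum.cong) (auto simp: \<alpha>_def)
        finally show "w c = (\<Sum>r\<in>R. \<alpha> r * (omega (snd r) c - omega (fst r) c))" using w by simp
      qed
      then show "w \<in> incidence_image R" unfolding incidence_image_def by blast
    qed
  qed
  let ?conn = "\<lambda>i. (y1, y2) \<in> (Rs i \<union> (Rs i)\<inverse>)\<^sup>*"
  have uniq: "\<not> ?conn j" if "i < k" "j < k" "i \<noteq> j" "?conn i" for i j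
  proof
    assume "?conn j"
    obtain vs es where p1: "is_path (Rs i) y1 y2 vs es" using path_exists[OF \<open>?conn i\<close>] by blast
    obtain vs' es' where p2: "is_path (Rs j) y1 y2 vs' es'" using path_exists[OF \<open>?conn j\<close>] by blast
    have "es = es'" using assms(6)[rule_format, OF conjI[OF is_path_mono[OF p1 sub[OF that(1)]] is_path_mono[OF p2 sub[OF that(2)]]]]
      by simp
    have "0 < length es"
    proof (rule ccontr)
      assume "\<not> 0 < length es"
      then have "length vs \<le> 1" "vs \<noteq> []" "hd vs = y1" "last vs = y2" using p1 unfolding is_path_def by (auto simp: Suc_le_eq)
      then show False using assms(3) by (cases vs) auto
    qed
    then have "es ! 0 \<in> Rs i" "es' ! 0 \<in> Rs j" using p1 p2 \<open>es = es'\<close> unfolding is_path_def by auto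
    then have "es ! 0 \<in> Rs i \<inter> Rs j" using \<open>es = es'\<close> by simp
    then show False using dec(2) that(1-3) by auto
  qed
  have indep: "\<forall>i<k. \<forall>c. v i c = 0"
    if v: "\<forall>i<k. v i \<in> incidence_image (Rs i)" and s: "\<forall>c. (\<Sum>i<k. v i c) = 0" for v
  proof -
    have only: "v i c = 0" if "i < k" "\<forall>j<k. j \<noteq> i \<longrightarrow> v j c = 0" for i c
    proof -
      have "(\<Sum>j<k. v j c) = v i c + (\<Sum>j\<in>{..<k} - {i}. v j c)"
        using that(1) by (intro sum.remove) auto
      also have "(\<Sum>j\<in>{..<k} - {i}. v j c) = 0" using that(2) by (intro sum.neutral) auto
      finally show ?thesis using s by simp
    qed
    have out: "v i c = 0" if "i < k" "c \<noteq> y1" "c \<noteq> y2" for i c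
    proof (cases "c \<in> complexes (Rs i)")
      case False then show ?thesis using img_zero_outside[OF v[rule_format, OF that(1)] False] by simp
    next
      case True
      have "v j c = 0" if "j < k" "j \<noteq> i" for j
      proof -
        have "c \<notin> complexes (Rs j)"
        proof
          assume "c \<in> complexes (Rs j)"
          then have "c \<in> common_complexes k Rs" using True \<open>i < k\<close> that
            unfolding common_complexes_def by blast
          then show False using assms(4) \<open>c \<noteq> y1\<close> \<open>c \<noteq> y2\<close> by simp
        qed
        then show ?thesis using img_zero_outside[OF v[rule_format, OF that(1)]] by simp
      qed
      then show ?thesis using only[OF \<open>i < k\<close>] by simp
    qed
    have nc: "v i c = 0" if "i < k" "\<not> ?conn i" for i c
    proof -
      have o: "\<forall>c. c \<noteq> y1 \<and> c \<noteq> y2 \<longrightarrow> v i c = 0" using out[OF that(1)] by simp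
      have a: "v i y1 = 0" using img_not_conn[OF finRs[OF that(1)] v[rule_format, OF that(1)] o that(2)] .
      have n2: "(y2, y1) \<notin> (Rs i \<union> (Rs i)\<inverse>)\<^sup>*" using that(2) conn_sym by metis
      have o2: "\<forall>c. c \<noteq> y2 \<and> c \<noteq> y1 \<longrightarrow> v i c = 0" using o by simp
      have b: "v i y2 = 0" by (rule img_not_conn[OF finRs[OF that(1)] v[rule_format, OF that(1)] o2 n2])
      show ?thesis using a b out that(1) by (cases "c = y1 \<or> c = y2") auto
    qed
    show ?thesis
    proof (intro allI impI)
      fix i c assume i: "i < k"
      show "v i c = 0"
      proof (cases "?conn i")
        case True
        have "\<forall>j<k. j \<noteq> i \<longrightarrow> v j c = 0"
        proof (intro allI impI)
          fix j assume "j < k" "j \<noteq> i"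
          then have "\<not> ?conn j" using uniq[OF i _ _ True] by simp
          then show "v j c = 0" using nc[OF \<open>j < k\<close>] by simp
        qed
        then show ?thesis by (rule only[OF i])
      next
        case False show ?thesis by (rule nc[OF i False])
      qed
    qed
  qed
  show ?thesis unfolding incidence_independent_def using Im_eq indep by blast
qed

end
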